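(* Let $\mathcal{H}$ be a real Hilbert space, let $A\colon \mathcal{H}\rightrightarrows\mathcal{H}$ be maximally monotone and $m$-strongly monotone, let $B\colon \mathcal{H}\to\mathcal{H}$ be monotone and $L$-Lipschitz continuous, and suppose $(A+B)^{-1}(0)\neq\varnothing$. Let $\lambda\in\left(0,\frac{1}{2L}\right)$. Given $x_0,x_{-1}\in\mathcal{H}$, define the sequence $(x_k)$ by $$x_{k+1} = J_{\lambda A}\bigl( x_k - 2\lambda B(x_k) +\lambda B(x_{k-1}) \bigr) \quad\forall k\in\mathbb{N}.$$ Then $(A+B)^{-1}(0)$ consists of a single point and $(x_k)$ converges $R$-linearly to it.
   Context: $J_{\lambda A}:=(I+\lambda A)^{-1}$ is the resolvent. $A$ is $m$-strongly monotone if $m>0$ and $\langle x-y,u-v\rangle\geq m\|x-y\|^2$ for all $(x,u),(y,v)$ in the graph of $A$. A sequence $(x_k)$ converges $R$-linearly to $x^*$ if there exist $C\geq 0$ and $q\in(0,1)$ with $\|x_k-x^*\|\leq Cq^k$ for all $k$. *)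

theory Defs
  imports "HOL-Analysis.Analysis"
begin

definition monotone_op :: "('a::real_inner \<Rightarrow> 'a set) \<Rightarrow> bool" where
  "monotone_op A \<longleftrightarrow>
     (\<forall>x y u v. u \<in> A x \<longrightarrow> v \<in> A y \<longrightarrow> inner (x - y) (u - v) \<ge> 0)"

definition maximally_monotone :: "('a::real_inner \<Rightarrow> 'a set) \<Rightarrow> bool" where
  "maximally_monotone A \<longleftrightarrow> monotone_op A \<and>
     (\<forall>x u. (\<forall>y v. v \<in> A y \<longrightarrow> inner (x - y) (u - v) \<ge> 0) \<longrightarrow> u \<in> A x)"

definition strongly_monotone :: "real \<Rightarrow> ('a::real_inner \<Rightarrow> 'a set) \<Rightarrow> bool" where
  "strongly_monotone m A \<longleftrightarrow> m > 0 \<and>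
     (\<forall>x y u v. u \<in> A x \<longrightarrow> v \<in> A y \<longrightarrow> inner (x - y) (u - v) \<ge> m * (norm (x - y))\<^sup>2)"

definition monotone_fun :: "('a::real_inner \<Rightarrow> 'a) \<Rightarrow> bool" where
  "monotone_fun B \<longleftrightarrow> (\<forall>x y. inner (x - y) (B x - B y) \<ge> 0)"

text \<open>Resolvent J_{lam A} = (I + lam A)^{-1}, as a set-valued inverse:
  x \<in> J z iff z \<in> x + lam A x.\<close>
definition resolvent :: "real \<Rightarrow> ('a::real_inner \<Rightarrow> 'a set) \<Rightarrow> 'a \<Rightarrow> 'a set" where
  "resolvent lam A z = {x. \<exists>u \<in> A x. z = x + lam *\<^sub>R u}"

definition zeros_sum :: "('a::real_inner \<Rightarrow> 'a set) \<Rightarrow> ('a \<Rightarrow> 'a) \<Rightarrow> 'a set" where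
  "zeros_sum A B = {z. \<exists>u \<in> A z. u + B z = 0}"

definition R_linear_conv :: "(nat \<Rightarrow> 'a::real_normed_vector) \<Rightarrow> 'a \<Rightarrow> bool" where
  "R_linear_conv x xs \<longleftrightarrow> (\<exists>C q. C \<ge> 0 \<and> 0 < q \<and> q < 1 \<and> (\<forall>k. norm (x k - xs) \<le> C * q ^ k))"

end

theory Submission
  imports Defs
begin

lemma step_ineq:
  fixes p0 p1 p2 z u :: "'a::real_inner" and B :: "'a \<Rightarrow> 'a"
  assumes lam: "lam > 0" and L: "L \<ge> 0"
    and res: "p1 - (2 * lam) *\<^sub>R B p1 + lam *\<^sub>R B p0 = p2 + lam *\<^sub>R u"
    and sm: "inner (p2 - z) (u - (- B z)) \<ge> m * (norm (p2 - z))\<^sup>2"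
    and mono: "inner (p2 - z) (B p2 - B z) \<ge> 0"
    and lip: "norm (B p1 - B p0) \<le> L * norm (p1 - p0)"
  shows "((norm (p2 - z))\<^sup>2 - 2 * lam * inner (p2 - z) (B p2 - B p1) + lam * L * (norm (p2 - p1))\<^sup>2)
     + 2 * lam * m * (norm (p2 - z))\<^sup>2 + (1 - 2 * lam * L) * (norm (p2 - p1))\<^sup>2
     \<le> (norm (p1 - z))\<^sup>2 - 2 * lam * inner (p1 - z) (B p1 - B p0) + lam * L * (norm (p1 - p0))\<^sup>2"
proof -
  have u: "lam *\<^sub>R u = p1 - p2 - (2 * lam) *\<^sub>R B p1 + lam *\<^sub>R B p0"
    using res by (simp add: algebra_simps)
  have sm2: "inner (p2 - z) (lam *\<^sub>R u) + lam * inner (p2 - z) (B z) \<ge> lam * m * (norm (p2 - z))\<^sup>2"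
  proof -
    have "lam * (m * (norm (p2 - z))\<^sup>2) \<le> lam * inner (p2 - z) (u - (- B z))"
      using sm lam by (simp add: mult_left_mono)
    then show ?thesis by (simp add: inner_diff_right inner_add_right algebra_simps)
  qed
  define s where "s = norm (p2 - p1)"
  define t where "t = norm (p1 - p0)"
  have cs: "inner (p2 - p1) (B p1 - B p0) \<ge> - (s * (L * t))"
  proof -
    have "\<bar>inner (p2 - p1) (B p1 - B p0)\<bar> \<le> s * norm (B p1 - B p0)"
      unfolding s_def by (rule Cauchy_Schwarz_ineq2)
    also have "\<dots> \<le> s * (L * t)" unfolding t_def using lip by (simp add: s_def mult_left_mono)
    finally show ?thesis by linarith
  qed
  have st: "2 * (s * (L * t)) \<le> L * (s\<^sup>2 + t\<^sup>2)"
  proof -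
    have "2 * s * t \<le> s\<^sup>2 + t\<^sup>2" using sum_squares_bound[of s t] by simp
    from mult_left_mono[OF this L] show ?thesis by (simp add: algebra_simps)
  qed
  have cs2: "lam * inner (p2 - p1) (B p1 - B p0) \<ge> - (lam * L * (s\<^sup>2 + t\<^sup>2) / 2)"
  proof -
    have "inner (p2 - p1) (B p1 - B p0) \<ge> - (L * (s\<^sup>2 + t\<^sup>2) / 2)" using cs st by linarith
    from mult_left_mono[OF this less_imp_le[OF lam]] show ?thesis by (simp add: algebra_simps)
  qed
  have mono2: "lam * inner (p2 - z) (B p2 - B z) \<ge> 0" using mono lam by simp
  have s2: "s\<^sup>2 = inner (p2 - p1) (p2 - p1)" unfolding s_def by (simp add: power2_norm_eq_inner)
  have t2: "t\<^sup>2 = inner (p1 - p0) (p1 - p0)" unfolding t_def by (simp add: power2_norm_eq_inner)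
  define S1 where "S1 = inner (p2 - z) (lam *\<^sub>R u) + lam * inner (p2 - z) (B z) - lam * m * (norm (p2 - z))\<^sup>2"
  define S2 where "S2 = lam * inner (p2 - z) (B p2 - B z)"
  define S3 where "S3 = 2 * lam * inner (p2 - p1) (B p1 - B p0) + lam * L * (s\<^sup>2 + t\<^sup>2)"
  have "S1 \<ge> 0" using sm2 unfolding S1_def by linarith
  moreover have "S2 \<ge> 0" using mono2 unfolding S2_def by linarith
  moreover have "S3 \<ge> 0" using cs2 unfolding S3_def by linarith
  moreover have "((norm (p1 - z))\<^sup>2 - 2 * lam * inner (p1 - z) (B p1 - B p0) + lam * L * (norm (p1 - p0))\<^sup>2)
     - (((norm (p2 - z))\<^sup>2 - 2 * lam * inner (p2 - z) (B p2 - B p1) + lam * L * (norm (p2 - p1))\<^sup>2)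
     + 2 * lam * m * (norm (p2 - z))\<^sup>2 + (1 - 2 * lam * L) * (norm (p2 - p1))\<^sup>2)
     = 2 * S1 + 2 * S2 + S3"
    unfolding S1_def S2_def S3_def s2 t2 u power2_norm_eq_inner
    by (simp add: inner_diff_left inner_diff_right inner_add_left inner_add_right
        inner_commute algebra_simps)
  ultimately show ?thesis by linarith
qed

lemma V_bounds:
  fixes p q z :: "'a::real_inner" and B :: "'a \<Rightarrow> 'a"
  assumes lam: "lam > 0" and L: "L \<ge> 0"
    and lip: "norm (B q - B p) \<le> L * norm (q - p)"
  shows "(1 - lam * L) * (norm (q - z))\<^sup>2
           \<le> (norm (q - z))\<^sup>2 - 2 * lam * inner (q - z) (B q - B p) + lam * L * (norm (q - p))\<^sup>2"
    and "(norm (q - z))\<^sup>2 - 2 * lam * inner (q - z) (B q - B p) + lam * L * (norm (q - p))\<^sup>2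
           \<le> (1 + lam * L) * (norm (q - z))\<^sup>2 + 2 * lam * L * (norm (q - p))\<^sup>2"
proof -
  define a where "a = norm (q - z)"
  define b where "b = norm (q - p)"
  have "\<bar>inner (q - z) (B q - B p)\<bar> \<le> a * norm (B q - B p)"
    unfolding a_def by (rule Cauchy_Schwarz_ineq2)
  also have "\<dots> \<le> a * (L * b)" unfolding b_def using lip by (simp add: a_def mult_left_mono)
  finally have c1: "\<bar>inner (q - z) (B q - B p)\<bar> \<le> a * (L * b)" .
  have "2 * a * b \<le> a\<^sup>2 + b\<^sup>2" using sum_squares_bound[of a b] by simp
  from mult_left_mono[OF this, of "lam * L"] have c2: "lam * L * (2 * a * b) \<le> lam * L * (a\<^sup>2 + b\<^sup>2)"
    using lam L by simp
  have c3: "\<bar>2 * lam * inner (q - z) (B q - B p)\<bar> \<le> 2 * lam * (a * (L * b))"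
    using c1 lam by (simp add: abs_mult)
  have c4: "2 * lam * (a * (L * b)) = lam * L * (2 * a * b)" by (simp add: algebra_simps)
  show "(1 - lam * L) * (norm (q - z))\<^sup>2
           \<le> (norm (q - z))\<^sup>2 - 2 * lam * inner (q - z) (B q - B p) + lam * L * (norm (q - p))\<^sup>2"
    using c2 c3 c4 unfolding a_def[symmetric] b_def[symmetric] by (simp add: algebra_simps abs_le_iff)
  show "(norm (q - z))\<^sup>2 - 2 * lam * inner (q - z) (B q - B p) + lam * L * (norm (q - p))\<^sup>2
           \<le> (1 + lam * L) * (norm (q - z))\<^sup>2 + 2 * lam * L * (norm (q - p))\<^sup>2"
    using c2 c3 c4 unfolding a_def[symmetric] b_def[symmetric] by (simp add: algebra_simps abs_le_iff)
qed

theorem theorem2p9: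
  fixes A :: "'a::{real_inner, complete_space} \<Rightarrow> 'a set"
    and B :: "'a \<Rightarrow> 'a"
    and m L lam :: real
    and x :: "nat \<Rightarrow> 'a" and xm1 :: 'a
  assumes "maximally_monotone A"
    and "strongly_monotone m A"
    and "monotone_fun B"
    and "L-lipschitz_on UNIV B"
    and "zeros_sum A B \<noteq> {}"
    and "0 < lam" and "2 * L * lam < 1"
    and "x 1 \<in> resolvent lam A (x 0 - (2 * lam) *\<^sub>R B (x 0) + lam *\<^sub>R B xm1)"
    and "\<And>k. x (Suc (Suc k)) \<in>
           resolvent lam A (x (Suc k) - (2 * lam) *\<^sub>R B (x (Suc k)) + lam *\<^sub>R B (x k))"
  shows "\<exists>z. zeros_sum A B = {z} \<and> R_linear_conv x z"
proof -
  have Lnn: "L \<ge> 0" using assms(4) by (simp add: lipschitz_on_def)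
  have lipB: "\<And>p q. norm (B p - B q) \<le> L * norm (p - q)"
    using assms(4) by (simp add: lipschitz_on_def dist_norm)
  have mpos: "m > 0" using assms(2) unfolding strongly_monotone_def by auto
  have smA: "\<And>x y u v. u \<in> A x \<Longrightarrow> v \<in> A y \<Longrightarrow> inner (x - y) (u - v) \<ge> m * (norm (x - y))\<^sup>2"
    using assms(2) unfolding strongly_monotone_def by auto
  have monoB: "\<And>x y. inner (x - y) (B x - B y) \<ge> 0" using assms(3) unfolding monotone_fun_def by auto
  have lam: "lam > 0" by (rule assms(6))
  obtain z where zz: "z \<in> zeros_sum A B" using assms(5) by blast
  then obtain uz where uz: "uz \<in> A z" "uz + B z = 0" unfolding zeros_sum_def by blast
  hence "uz = - B z" by (simp add: eq_neg_iff_add_eq_0)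
  with uz have zA: "- B z \<in> A z" by simp
  have uniq: "zeros_sum A B = {z}"
  proof
    show "{z} \<subseteq> zeros_sum A B" using zz by simp
    show "zeros_sum A B \<subseteq> {z}"
    proof
      fix w assume "w \<in> zeros_sum A B"
      then obtain uw where uw: "uw \<in> A w" "uw + B w = 0" unfolding zeros_sum_def by blast
      hence "uw = - B w" by (simp add: eq_neg_iff_add_eq_0)
      with uw have wA: "- B w \<in> A w" by simp
      have h1: "inner (w - z) (- B w - - B z) \<ge> m * (norm (w - z))\<^sup>2" using smA[OF wA zA] .
      have "- B w - - B z = - (B w - B z)" by simp
      hence "inner (w - z) (- B w - - B z) = - inner (w - z) (B w - B z)"
        by (simp only: inner_minus_right)
      with h1 monoB[of w z] have "m * (norm (w - z))\<^sup>2 \<le> 0" by linarith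
      with mpos have "(norm (w - z))\<^sup>2 \<le> 0" by (simp add: mult_le_0_iff)
      hence "w = z" by simp
      thus "w \<in> {z}" by simp
    qed
  qed
  define y where "y = (\<lambda>k. case k of 0 \<Rightarrow> xm1 | Suc j \<Rightarrow> x j)"
  have yrec: "y (Suc (Suc k)) \<in> resolvent lam A (y (Suc k) - (2 * lam) *\<^sub>R B (y (Suc k)) + lam *\<^sub>R B (y k))" for k
  proof (cases k)
    case 0
    then show ?thesis using assms(8) by (simp add: y_def)
  next
    case (Suc j)
    then show ?thesis using assms(9)[of j] by (simp add: y_def)
  qed
  define V where "V k = (norm (y (Suc k) - z))\<^sup>2 - 2 * lam * inner (y (Suc k) - z) (B (y (Suc k)) - B (y k))
      + lam * L * (norm (y (Suc k) - y k))\<^sup>2" for k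
  define eps where "eps = min (2 * lam * m / (1 + lam * L)) (1 - 2 * lam * L)"
  have lL: "lam * L \<ge> 0" using lam Lnn by simp
  have lL1: "2 * lam * L < 1" using assms(7) by (simp add: algebra_simps)
  have eps_pos: "eps > 0" unfolding eps_def using lam mpos lL lL1 by simp
  have eps1: "eps * (1 + lam * L) \<le> 2 * lam * m"
  proof -
    have "eps \<le> 2 * lam * m / (1 + lam * L)" unfolding eps_def by simp
    thus ?thesis using lL by (simp add: pos_le_divide_eq)
  qed
  have eps2: "eps * (2 * lam * L) \<le> 1 - 2 * lam * L"
  proof -
    have "eps \<le> 1 - 2 * lam * L" unfolding eps_def by simp
    moreover have "eps * (2 * lam * L) \<le> eps * 1"
      using eps_pos lL1 by (intro mult_left_mono) auto
    ultimately show ?thesis by simp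
  qed
  have Vlow: "(1 - lam * L) * (norm (y (Suc k) - z))\<^sup>2 \<le> V k" for k
    unfolding V_def by (rule V_bounds(1)[OF lam Lnn lipB])
  have Vup: "V k \<le> (1 + lam * L) * (norm (y (Suc k) - z))\<^sup>2 + 2 * lam * L * (norm (y (Suc k) - y k))\<^sup>2" for k
    unfolding V_def by (rule V_bounds(2)[OF lam Lnn lipB])
  have Vstep: "(1 + eps) * V (Suc k) \<le> V k" for k
  proof -
    obtain u where u: "u \<in> A (y (Suc (Suc k)))"
      "y (Suc k) - (2 * lam) *\<^sub>R B (y (Suc k)) + lam *\<^sub>R B (y k) = y (Suc (Suc k)) + lam *\<^sub>R u"
      using yrec[of k] unfolding resolvent_def by blast
    have st: "V (Suc k) + 2 * lam * m * (norm (y (Suc (Suc k)) - z))\<^sup>2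
        + (1 - 2 * lam * L) * (norm (y (Suc (Suc k)) - y (Suc k)))\<^sup>2 \<le> V k"
      unfolding V_def
      by (rule step_ineq[OF lam Lnn u(2) smA[OF u(1) zA] monoB lipB])
    define d where "d = (norm (y (Suc (Suc k)) - z))\<^sup>2"
    define e where "e = (norm (y (Suc (Suc k)) - y (Suc k)))\<^sup>2"
    have d0: "d \<ge> 0" and e0: "e \<ge> 0" unfolding d_def e_def by simp_all
    have "eps * V (Suc k) \<le> eps * ((1 + lam * L) * d + 2 * lam * L * e)"
      using Vup[of "Suc k"] eps_pos unfolding d_def e_def by (intro mult_left_mono) auto
    also have "\<dots> = (eps * (1 + lam * L)) * d + (eps * (2 * lam * L)) * e" by (simp add: algebra_simps)
    also have "\<dots> \<le> (2 * lam * m) * d + (1 - 2 * lam * L) * e"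
      using eps1 eps2 d0 e0 by (intro add_mono mult_right_mono) auto
    finally have "eps * V (Suc k) \<le> (2 * lam * m) * d + (1 - 2 * lam * L) * e" .
    with st show ?thesis unfolding d_def e_def by (simp add: algebra_simps)
  qed
  define r where "r = 1 / (1 + eps)"
  have r0: "r > 0" and r1: "r < 1" unfolding r_def using eps_pos by simp_all
  have Vgeo: "V k \<le> V 0 * r ^ k" for k
  proof (induction k)
    case 0 then show ?case by simp
  next
    case (Suc k)
    have "V (Suc k) \<le> V k * r" using Vstep[of k] eps_pos unfolding r_def
      by (simp add: field_simps)
    also have "\<dots> \<le> V 0 * r ^ k * r" using Suc r0 by (simp add: mult_right_mono)
    finally show ?case by (simp add: algebra_simps)
  qed
  have lL2: "1 - lam * L > 0" using lL1 lL by linarith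
  have V00: "V 0 \<ge> 0" using Vlow[of 0] lL2 by (smt (verit) zero_le_power2 mult_nonneg_nonneg)
  define C where "C = sqrt (V 0 / (1 - lam * L))"
  define q where "q = sqrt r"
  have C0: "C \<ge> 0" unfolding C_def using V00 lL2 by simp
  have q0: "q > 0" and q1: "q < 1" unfolding q_def using r0 r1 by simp_all
  have bound: "norm (x k - z) \<le> C * q ^ k" for k
  proof -
    have xk: "x k = y (Suc k)" by (simp add: y_def)
    have "(1 - lam * L) * (norm (x k - z))\<^sup>2 \<le> V 0 * r ^ k" using Vlow[of k] Vgeo[of k] xk by simp
    hence "(norm (x k - z))\<^sup>2 \<le> V 0 * r ^ k / (1 - lam * L)" using lL2 by (simp add: field_simps)
    also have "\<dots> = (C * q ^ k)\<^sup>2"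
    proof -
      have C2: "C\<^sup>2 = V 0 / (1 - lam * L)" unfolding C_def using V00 lL2 by simp
      have q2: "q\<^sup>2 = r" unfolding q_def using r0 by simp
      have "(q ^ k)\<^sup>2 = (q\<^sup>2) ^ k" by (metis power_mult mult.commute)
      hence qk: "(q ^ k)\<^sup>2 = r ^ k" using q2 by simp
      have "(C * q ^ k)\<^sup>2 = C\<^sup>2 * (q ^ k)\<^sup>2" by (rule power_mult_distrib)
      also have "\<dots> = V 0 / (1 - lam * L) * r ^ k" by (simp only: C2 qk)
      finally show ?thesis by simp
    qed
    finally have h: "(norm (x k - z))\<^sup>2 \<le> (C * q ^ k)\<^sup>2" .
    have pos: "0 \<le> C * q ^ k" using C0 q0 by simp
    show ?thesis by (rule power2_le_imp_le[OF h pos])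
  qed
  have "R_linear_conv x z" unfolding R_linear_conv_def using C0 q0 q1 bound by blast
  with uniq show ?thesis by blast
qed

end
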